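(* Let $D$ be a digraph without parallel edges, let $X\subseteq E(D)$, let $S$ be a set with $|S|=k$, and let $\lambda_1:E(D)\setminus X\to S$ and $\lambda_2:X\to S$. If $(E(D)\setminus X, X)$, viewed as a partition of the vertex set of $\vec{L}(D)$, is $(\lambda_1,\lambda_2)$-consistent in $\vec{L}(D)$, then $|S^V_X|\le 4k$.
   Context: All digraphs are finite and loopless. The directed line graph $\vec{L}(D)$ has vertex set $E(D)$ and an edge $\vec{ef}$ whenever $e=\vec{wx}$ and $f=\vec{xy}$ for some vertices $w,x,y$ of $D$. For $X\subseteq E(D)$, $S^V_X=\{y\in V(D): \exists x,z \text{ with } \vec{xy}\in E(D)\setminus X \text{ and } \vec{yz}\in X\}$. For a digraph $H$, a partition $(A,B)$ of $V(H)$ and functions $\lambda_A:A\to S$, $\lambda_B:B\to S$, $(A,B)$ is $(\lambda_A,\lambda_B)$-consistent if (i) for all $a_1,a_2\in A$ with $\lambda_A(a_1)=\lambda_A(a_2)$ and all $b\in B$: $\vec{a_1b}\in E(H)$ iff $\vec{a_2b}\in E(H)$; and (ii) for all $b_1,b_2\in B$ with $\lambda_B(b_1)=\lambda_B(b_2)$ and all $a\in A$: $\vec{ab_1}\in E(H)$ iff $\vec{ab_2}\in E(H)$. *)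

theory Defs
  imports Main
begin

(* A digraph D without parallel edges: finite vertex set V, edge set E \<subseteq> V \<times> V
   (edges are ordered pairs, so no parallel edges), loopless. *)
definition simple_digraph :: "'v set \<Rightarrow> ('v \<times> 'v) set \<Rightarrow> bool" where
  "simple_digraph V E \<longleftrightarrow> finite V \<and> E \<subseteq> V \<times> V \<and> (\<forall>v. (v, v) \<notin> E)"

definition line_adj :: "('v \<times> 'v) set \<Rightarrow> ('v \<times> 'v) \<Rightarrow> ('v \<times> 'v) \<Rightarrow> bool" where
  "line_adj E e f \<longleftrightarrow> e \<in> E \<and> f \<in> E \<and> (\<exists>w x y. e = (w, x) \<and> f = (x, y))"

definition SVX :: "('v \<times> 'v) set \<Rightarrow> ('v \<times> 'v) set \<Rightarrow> 'v set" where
  "SVX E X = {y. \<exists>x z. (x, y) \<in> E - X \<and> (y, z) \<in> X}"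

definition consistent ::
  "('a \<Rightarrow> 'a \<Rightarrow> bool) \<Rightarrow> 'a set \<Rightarrow> 'a set \<Rightarrow> ('a \<Rightarrow> 's) \<Rightarrow> ('a \<Rightarrow> 's) \<Rightarrow> bool" where
  "consistent adj A B lamA lamB \<longleftrightarrow>
     (\<forall>a1\<in>A. \<forall>a2\<in>A. lamA a1 = lamA a2 \<longrightarrow> (\<forall>b\<in>B. adj a1 b \<longleftrightarrow> adj a2 b)) \<and>
     (\<forall>b1\<in>B. \<forall>b2\<in>B. lamB b1 = lamB b2 \<longrightarrow> (\<forall>a\<in>A. adj a b1 \<longleftrightarrow> adj a b2))"

end

theory Submission
  imports Defs
begin

theorem mainTheorem3:
  fixes V :: "'v set" and E X :: "('v \<times> 'v) set" and S :: "'s set" and k :: nat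
    and lam1 lam2 :: "('v \<times> 'v) \<Rightarrow> 's"
  assumes "simple_digraph V E"
    and "X \<subseteq> E"
    and "finite S" and "card S = k"
    and "\<forall>e\<in>E - X. lam1 e \<in> S"
    and "\<forall>e\<in>X. lam2 e \<in> S"
    and "consistent (line_adj E) (E - X) X lam1 lam2"
  shows "card (SVX E X) \<le> 4 * k"
proof -
  define a where "a y = (SOME e. e \<in> E - X \<and> snd e = y)" for y
  define b where "b y = (SOME e. e \<in> X \<and> fst e = y)" for y
  have ab: "a y \<in> E - X \<and> snd (a y) = y \<and> b y \<in> X \<and> fst (b y) = y" if "y \<in> SVX E X" for y
  proof -
    from that obtain x z where "(x, y) \<in> E - X" "(y, z) \<in> X" unfolding SVX_def by auto
    then show ?thesis unfolding a_def b_def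
      by (metis (mono_tags, lifting) fst_conv snd_conv someI)
  qed
  have inj: "inj_on (\<lambda>y. lam1 (a y)) (SVX E X)"
  proof (rule inj_onI)
    fix y y' assume y: "y \<in> SVX E X" and y': "y' \<in> SVX E X" and eq: "lam1 (a y) = lam1 (a y')"
    have "line_adj E (a y) (b y)" using ab[OF y] assms(2) unfolding line_adj_def
      by (metis (no_types, lifting) DiffD1 in_mono prod.collapse)
    moreover have "line_adj E (a y) (b y) \<longleftrightarrow> line_adj E (a y') (b y)"
      using assms(7) ab[OF y] ab[OF y'] eq unfolding consistent_def by metis
    ultimately have "line_adj E (a y') (b y)" by simp
    then show "y = y'" using ab[OF y] ab[OF y'] unfolding line_adj_def by auto
  qed
  have "(\<lambda>y. lam1 (a y)) ` SVX E X \<subseteq> S" using ab assms(5) by auto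
  then have "card (SVX E X) \<le> card S" using card_inj_on_le[OF inj] assms(3) by blast
  then show ?thesis using assms(4) by simp
qed

end
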